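(* In the high-dimensional setting below, assume $\epsilon_{I,j}\ne0$ for all $j$. If for some constant $c>1$ the penalty levels satisfy $$\lambda\gamma\ge\frac{c+1}{c-1}\max_{j\in[p]}\frac{\|(X^{(n)}_{I,j^c})^\top\epsilon_{I,j}\|_\infty}{\|\epsilon_{I,j}\|_2}\quad\text{and}\quad\lambda\ge\frac{c+1}{c-1}\max_{i\in[n]}\Big(\sum_{j\in[p]}\frac{\epsilon_{ij}^2}{\|\epsilon_{I,j}\|_2^2}\Big)^{1/2},$$ then $\widehat\Delta\in\mathscr C_{\mathcal J,O}(c,\gamma)$.
   Context: High-dimensional setting. Let $n,p\ge1$, $[n]=\{1,\dots,n\}$. $X=Y+E^*\in\mathbb R^{n\times p}$ where (C1) the rows of $Y$ are independent $\mathcal N_p(\mu^*,\Sigma^* )$, $\Sigma^*$ positive definite; (C2) $E^*$ is deterministic, $[n]=I\cup O$ a partition with the rows of $E^*$ indexed by $I$ equal to zero, and every row of $E^*(\Sigma^* )^{-1/2}$ of Euclidean norm at most $M_E\sqrt p$; $\mu^*=0$. $\Omega^*=(\Sigma^* )^{-1}$ with diagonal entries $\omega^*_{jj}$, $B^*=\Omega^*\mathrm{diag}(\Omega^* )^{-1}$, $X^{(n)}=X/\sqrt n$, $\Theta^*=E^*B^*/\sqrt n$, $\xi=X^{(n)}B^*-\Theta^*$, and $\epsilon\in\mathbb R^{n\times p}$ with $\epsilon_{ij}=\sqrt n(\omega^*_{jj})^{1/2}\xi_{ij}$. Notation: $A_{i,\bullet}$, $A_{\bullet,j}$ rows/columns,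 $A_{K,J}$ submatrices, $j^c=[p]\setminus\{j\}$, $\|A\|_{q_1,q_2}=(\sum_i\|A_{i,\bullet}\|_{q_1}^{q_2})^{1/q_2}$, $\|A^\top\|_{2,1}=\sum_j\|A_{\bullet,j}\|_2$. Estimator: for $\lambda,\gamma\ge0$, $(\widehat B,\widehat\Theta)$ minimizes $F(B,\Theta)=\|(X^{(n)}B-\Theta)^\top\|_{2,1}+\lambda(\|\Theta\|_{2,1}+\gamma\|B\|_{1,1})$ over $B\in\mathbb R^{p\times p}$ with all $B_{jj}=1$ and $\Theta\in\mathbb R^{n\times p}$. Let $\mathcal J=\{J_j:j\in[p]\}$, $J_j\subset[p]$, be such that $B^*_{i,j}=0$ whenever $i\notin J_j$; for a $p\times p$ matrix $A$, $A_{\mathcal J}$ is obtained by zeroing entries $A_{i,j}$ with $i\notin J_j$, and $A_{\mathcal J^c}=A-A_{\mathcal J}$. $\xi_O$ is the $n\times p$ matrix equal to $\xi$ on the rows indexed by $O$ and zero elsewhere; $\bar\Theta^*=\Theta^*+\xi_O$. $\widehat\Delta^B=\widehat B-B^*$, $\widehat\Delta^\Theta=\widehat\Theta-\bar\Theta^*$, and $\widehat\Delta\in\mathbb R^{(p+n)\times p}$ is the matrix obtained by stacking $\widehat\Delta^B$ above $\widehat\Delta^\Theta$. For $\Delta\in\mathbb R^{(p+n)\times p}$ write $\Delta^B=\Delta_{1:p,\bullet}$, $\Delta^\Theta=\Delta_{(p+1):(p+n),\bullet}$; cone: $\mathscr C_{\mathcal J,O}(c,\gamma)=\{\Delta:\gamma\|\Delta^B_{\mathcal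 J^c}\|_{1,1}+\|\Delta^\Theta_{O^c,\bullet}\|_{2,1}\le c(\gamma\|\Delta^B_{\mathcal J}\|_{1,1}+\|\Delta^\Theta_{O,\bullet}\|_{2,1})\}$, with $O^c=I$. *)

theory Defs
  imports "HOL-Analysis.Analysis"
begin

text \<open>Matrices are real^'c^'r (rows indexed by 'r, columns by 'c); A $ i $ j is entry (i,j).
  [n] is the finite type 'n, [p] the finite type 'p.\<close>

definition pos_def_mat :: "real^'p^'p \<Rightarrow> bool" where
  "pos_def_mat S \<longleftrightarrow> transpose S = S \<and> (\<forall>x. x \<noteq> 0 \<longrightarrow> x \<bullet> (S *v x) > 0)"

definition Xn :: "real^'p^'n \<Rightarrow> real^'p^'n" where
  "Xn X = (1 / sqrt (real CARD('n))) *\<^sub>R X"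

definition Omega :: "real^'p^'p \<Rightarrow> real^'p^'p" where
  "Omega S = matrix_inv S"

definition Bstar :: "real^'p^'p \<Rightarrow> real^'p^'p" where
  "Bstar S = Omega S ** (\<chi> i j. if i = j then 1 / (Omega S $ j $ j) else 0)"

definition Thetastar :: "real^'p^'p \<Rightarrow> real^'p^'n \<Rightarrow> real^'p^'n" where
  "Thetastar S E = (1 / sqrt (real CARD('n))) *\<^sub>R (E ** Bstar S)"

definition xi :: "real^'p^'p \<Rightarrow> real^'p^'n \<Rightarrow> real^'p^'n \<Rightarrow> real^'p^'n" where
  "xi S E X = Xn X ** Bstar S - Thetastar S E"

definition epsm :: "real^'p^'p \<Rightarrow> real^'p^'n \<Rightarrow> real^'p^'n \<Rightarrow> real^'p^'n" where
  "epsm S E X = (\<chi> i j. sqrt (real CARD('n)) * sqrt (Omega S $ j $ j) * xi S E X $ i $ j)"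

definition rows_restrict :: "'n set \<Rightarrow> real^'p^'n \<Rightarrow> real^'p^'n" where
  "rows_restrict Ob A = (\<chi> i. if i \<in> Ob then A $ i else 0)"

definition col_norm_on :: "'n set \<Rightarrow> real^'p^'n \<Rightarrow> 'p \<Rightarrow> real" where
  "col_norm_on I A j = sqrt (\<Sum>i\<in>I. (A $ i $ j)\<^sup>2)"

text \<open>|| (A_{I,j^c})^T v_{I,j} ||_infinity with v = the j-th column of V; max over the
  empty set (p = 1) is taken to be 0.\<close>
definition cross_sup :: "'n set \<Rightarrow> real^'p^'n \<Rightarrow> real^'p^'n \<Rightarrow> 'p \<Rightarrow> real" where
  "cross_sup I A V j = Max (insert 0 ((\<lambda>k. \<bar>\<Sum>i\<in>I. A $ i $ k * V $ i $ j\<bar>) ` (UNIV - {j})))"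

definition norm_T21 :: "real^'p^'n \<Rightarrow> real" where
  "norm_T21 A = (\<Sum>j\<in>UNIV. norm (column j A))"

definition norm21_on :: "'r set \<Rightarrow> real^'c^'r \<Rightarrow> real" where
  "norm21_on K A = (\<Sum>i\<in>K. norm (A $ i))"

definition norm11 :: "real^'c^'r \<Rightarrow> real" where
  "norm11 A = (\<Sum>i\<in>UNIV. \<Sum>j\<in>UNIV. \<bar>A $ i $ j\<bar>)"

definition objF :: "real \<Rightarrow> real \<Rightarrow> real^'p^'n \<Rightarrow> real^'p^'p \<Rightarrow> real^'p^'n \<Rightarrow> real" where
  "objF lam gam X B Th = norm_T21 (Xn X ** B - Th) + lam * (norm21_on UNIV Th + gam * norm11 B)"

definition is_estimator :: "real \<Rightarrow> real \<Rightarrow> real^'p^'n \<Rightarrow> real^'p^'p \<Rightarrow> real^'p^'n \<Rightarrow> bool" where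
  "is_estimator lam gam X Bh Thh \<longleftrightarrow> (\<forall>j. Bh $ j $ j = 1) \<and>
     (\<forall>B Th. (\<forall>j. B $ j $ j = 1) \<longrightarrow> objF lam gam X Bh Thh \<le> objF lam gam X B Th)"

definition restrJ :: "('p \<Rightarrow> 'p set) \<Rightarrow> real^'p^'p \<Rightarrow> real^'p^'p" where
  "restrJ J A = (\<chi> i j. if i \<in> J j then A $ i $ j else 0)"

definition restrJc :: "('p \<Rightarrow> 'p set) \<Rightarrow> real^'p^'p \<Rightarrow> real^'p^'p" where
  "restrJc J A = A - restrJ J A"

definition stack :: "real^'p::finite^'p \<Rightarrow> real^'p^'n::finite \<Rightarrow> real^'p^('p + 'n)" where
  "stack A C = (\<chi> r. case r of Inl i \<Rightarrow> A $ i | Inr i \<Rightarrow> C $ i)"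
definition DeltaB :: "real^'p::finite^('p + 'n::finite) \<Rightarrow> real^'p^'p" where
  "DeltaB D = (\<chi> i. D $ Inl i)"

definition DeltaTheta :: "real^'p::finite^('p + 'n::finite) \<Rightarrow> real^'p^'n" where
  "DeltaTheta D = (\<chi> i. D $ Inr i)"

definition cone :: "('p::finite \<Rightarrow> 'p set) \<Rightarrow> 'n set \<Rightarrow> real \<Rightarrow> real \<Rightarrow> (real^'p^('p + 'n::finite)) set" where
  "cone J Ob c gam = {D. gam * norm11 (restrJc J (DeltaB D)) + norm21_on (- Ob) (DeltaTheta D)
      \<le> c * (gam * norm11 (restrJ J (DeltaB D)) + norm21_on Ob (DeltaTheta D))}"

end

theory Submission
  imports Defs
begin

lemma col_lb:
  fixes a d :: "'a::real_inner"
  assumes "a \<noteq> 0"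
  shows "norm a + inner a d / norm a \<le> norm (a + d)"
proof -
  have "inner a (a + d) \<le> norm a * norm (a + d)" by (rule norm_cauchy_schwarz)
  hence "norm a ^ 2 + inner a d \<le> norm a * norm (a+d)"
    by (simp add: inner_add_right power2_norm_eq_inner)
  moreover have "norm a > 0" using assms by simp
  ultimately show ?thesis by (simp add: field_simps power2_eq_square)
qed

lemma Max_range_ge: "f (x::'a::finite) \<le> Max (range f)"
  by (rule Max_ge) auto

lemma norm_vec_sq: "norm (v::real^'n) = sqrt (\<Sum>i\<in>UNIV. (v $ i)\<^sup>2)"
  by (simp add: norm_vec_def L2_set_def)

theorem mainTheorem16:
  fixes Y E :: "real^'p^'n" and Sigma :: "real^'p^'p"
    and I Ob :: "'n set" and J :: "'p \<Rightarrow> 'p set"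
    and ME lam gam c :: real and Bh :: "real^'p^'p" and Thh :: "real^'p^'n"
  assumes Sigma_pd: "pos_def_mat Sigma"
    and partition: "I \<inter> Ob = {}" "I \<union> Ob = UNIV"
    and E_inliers: "\<forall>i\<in>I. E $ i = 0"
    and E_bound: "\<forall>i. sqrt (E $ i \<bullet> (Omega Sigma *v (E $ i))) \<le> ME * sqrt (real CARD('p))"
    and J_supp: "\<forall>i j. i \<notin> J j \<longrightarrow> Bstar Sigma $ i $ j = 0"
    and eps_nz: "\<forall>j. \<exists>i\<in>I. epsm Sigma E (Y + E) $ i $ j \<noteq> 0"
    and lam_nn: "lam \<ge> 0" and gam_nn: "gam \<ge> 0"
    and c_gt: "c > 1"
    and lam_gam: "lam * gam \<ge> (c + 1) / (c - 1) *
        Max (range (\<lambda>j. cross_sup I (Xn (Y + E)) (epsm Sigma E (Y + E)) j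
                        / col_norm_on I (epsm Sigma E (Y + E)) j))"
    and lam_ge: "lam \<ge> (c + 1) / (c - 1) *
        Max (range (\<lambda>i. sqrt (\<Sum>j\<in>UNIV. (epsm Sigma E (Y + E) $ i $ j)\<^sup>2
                        / (col_norm_on I (epsm Sigma E (Y + E)) j)\<^sup>2)))"
    and est: "is_estimator lam gam (Y + E) Bh Thh"
  shows "stack (Bh - Bstar Sigma)
           (Thh - (Thetastar Sigma E + rows_restrict Ob (xi Sigma E (Y + E))))
         \<in> cone J Ob c gam"
proof -
  define X where "X = Xn (Y + E)"
  define ep where "ep = epsm Sigma E (Y + E)"
  define xs where "xs = xi Sigma E (Y + E)"
  define Bs where "Bs = Bstar Sigma"
  define Tb where "Tb = Thetastar Sigma E + rows_restrict Ob xs"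
  define D where "D = Bh - Bs"
  define T where "T = Thh - Tb"
  define R :: "real^'p^'n" where "R = (\<chi> i. if i \<in> I then xs $ i else 0)"
  define a where "a j = sqrt (real CARD('n)) * sqrt (Omega Sigma $ j $ j)" for j
  define r where "r j = col_norm_on I xs j" for j
  define mu1 where "mu1 = Max (range (\<lambda>j. cross_sup I X ep j / col_norm_on I ep j))"
  define mu2 where "mu2 = Max (range (\<lambda>i. sqrt (\<Sum>j\<in>UNIV. (ep $ i $ j)\<^sup>2 / (col_norm_on I ep j)\<^sup>2)))"
  have IO: "\<And>i. i \<in> I \<longleftrightarrow> i \<notin> Ob" using partition by blast
  have negOb: "- Ob = I" using partition by blast
  have ep_eq: "\<And>i j. ep $ i $ j = a j * xs $ i $ j" by (simp add: ep_def a_def epsm_def xs_def)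
  have epnz: "\<And>j. \<exists>i\<in>I. ep $ i $ j \<noteq> 0" using eps_nz unfolding ep_def by blast
  have a_nz: "\<And>j. a j \<noteq> 0" using epnz ep_eq by (metis mult_zero_left)
  have xs_nz: "\<And>j. \<exists>i\<in>I. xs $ i $ j \<noteq> 0" using epnz ep_eq by (metis mult_zero_right)
  have r_pos: "\<And>j. r j > 0"
  proof -
    fix j
    obtain i where i: "i \<in> I" "xs $ i $ j \<noteq> 0" using xs_nz by blast
    have "(xs $ i $ j)\<^sup>2 \<le> (\<Sum>i\<in>I. (xs $ i $ j)\<^sup>2)"
      by (rule member_le_sum) (use i in auto)
    moreover have "(xs $ i $ j)\<^sup>2 > 0" using i by simp
    ultimately have "(\<Sum>i\<in>I. (xs $ i $ j)\<^sup>2) > 0" by linarith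
    thus "r j > 0" unfolding r_def col_norm_on_def by simp
  qed
  have col_ep: "\<And>j. col_norm_on I ep j = \<bar>a j\<bar> * r j"
  proof -
    fix j
    have "(\<Sum>i\<in>I. (ep $ i $ j)\<^sup>2) = (a j)\<^sup>2 * (\<Sum>i\<in>I. (xs $ i $ j)\<^sup>2)"
      by (simp add: ep_eq sum_distrib_left power_mult_distrib)
    thus "col_norm_on I ep j = \<bar>a j\<bar> * r j"
      unfolding col_norm_on_def r_def by (simp add: real_sqrt_mult)
  qed
  have Om_nz: "\<And>j. Omega Sigma $ j $ j \<noteq> 0" using a_nz unfolding a_def by auto
  have Bs_diag: "\<And>j. Bs $ j $ j = 1"
    using Om_nz by (simp add: Bs_def Bstar_def matrix_matrix_mult_def if_distrib cong: if_cong)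
  have Bs_J: "\<And>i j. i \<notin> J j \<Longrightarrow> Bs $ i $ j = 0" using J_supp Bs_def by simp
  have Tb_I: "\<And>i. i \<in> I \<Longrightarrow> Tb $ i = 0"
    using E_inliers IO by (simp add: Tb_def Thetastar_def rows_restrict_def matrix_matrix_mult_def vec_eq_iff)
  have resid: "X ** Bs - Tb = R"
    using IO by (simp add: Tb_def R_def xs_def xi_def X_def Bs_def rows_restrict_def vec_eq_iff)
  have Dd: "\<And>j. D $ j $ j = 0" using est Bs_diag by (simp add: is_estimator_def D_def)
  have opt: "objF lam gam (Y+E) Bh Thh \<le> objF lam gam (Y+E) Bs Tb"
    using est Bs_diag by (simp add: is_estimator_def)
  define G where "G = X ** D - T"
  have decomp: "Xn (Y+E) ** Bh - Thh = R + G"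
  proof -
    have "Bh = Bs + D" "Thh = Tb + T" by (simp_all add: D_def T_def)
    hence "Xn (Y+E) ** Bh - Thh = (X ** Bs - Tb) + (X ** D - T)"
      by (simp add: X_def matrix_add_ldistrib)
    thus ?thesis using resid G_def by simp
  qed
  have Rij: "R $ i $ j = (if i \<in> I then xs $ i $ j else 0)" for i j by (simp add: R_def)
  define cc where "cc k j = (\<Sum>i\<in>I. xs $ i $ j * X $ i $ k) / r j" for k j
  define w where "w i j = R $ i $ j / r j" for i j
  have colj: "r j + (\<Sum>k\<in>UNIV. D $ k $ j * cc k j) - (\<Sum>i\<in>UNIV. T $ i $ j * w i j)
      \<le> norm (column j (R + G))" for j
  proof -
    have "(\<Sum>i\<in>UNIV. (R $ i $ j)\<^sup>2) = (\<Sum>i\<in>UNIV. if i \<in> I then (xs $ i $ j)\<^sup>2 else 0)"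
      by (rule sum.cong) (auto simp: Rij)
    also have "\<dots> = (\<Sum>i\<in>I. (xs $ i $ j)\<^sup>2)" by (simp add: sum.inter_restrict[symmetric])
    finally have nR: "norm (column j R) = r j"
      by (simp add: norm_vec_sq column_def r_def col_norm_on_def)
    have cne: "column j R \<noteq> 0" using r_pos[of j] nR by auto
    have cadd: "column j (R + G) = column j R + column j G" by (simp add: column_def vec_eq_iff)
    have inn: "column j R \<bullet> column j G = (\<Sum>k\<in>UNIV. D $ k $ j * (\<Sum>i\<in>I. xs $ i $ j * X $ i $ k))
        - (\<Sum>i\<in>UNIV. T $ i $ j * R $ i $ j)"
    proof -
      have "column j R \<bullet> column j G = (\<Sum>i\<in>UNIV. R $ i $ j * ((\<Sum>k\<in>UNIV. X $ i $ k * D $ k $ j) - T $ i $ j))"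
        by (simp add: inner_vec_def column_def G_def matrix_matrix_mult_def)
      also have "\<dots> = (\<Sum>i\<in>UNIV. \<Sum>k\<in>UNIV. R $ i $ j * X $ i $ k * D $ k $ j) - (\<Sum>i\<in>UNIV. T $ i $ j * R $ i $ j)"
        by (simp add: right_diff_distrib sum_subtractf sum_distrib_left ac_simps)
      also have "(\<Sum>i\<in>UNIV. \<Sum>k\<in>UNIV. R $ i $ j * X $ i $ k * D $ k $ j) = (\<Sum>k\<in>UNIV. \<Sum>i\<in>UNIV. D $ k $ j * (R $ i $ j * X $ i $ k))"
        by (rule trans[OF sum.swap], intro sum.cong refl) (simp add: algebra_simps)
      also have "\<dots> = (\<Sum>k\<in>UNIV. D $ k $ j * (\<Sum>i\<in>UNIV. R $ i $ j * X $ i $ k))"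
        by (simp add: sum_distrib_left)
      also have "\<dots> = (\<Sum>k\<in>UNIV. D $ k $ j * (\<Sum>i\<in>I. xs $ i $ j * X $ i $ k))"
      proof -
        have "(\<Sum>i\<in>UNIV. R $ i $ j * X $ i $ k) = (\<Sum>i\<in>I. xs $ i $ j * X $ i $ k)" for k
        proof -
          have "(\<Sum>i\<in>UNIV. R $ i $ j * X $ i $ k) = (\<Sum>i\<in>UNIV. if i \<in> I then xs $ i $ j * X $ i $ k else 0)"
            by (rule sum.cong) (auto simp: Rij)
          also have "\<dots> = (\<Sum>i\<in>I. xs $ i $ j * X $ i $ k)" by (simp add: sum.inter_restrict[symmetric])
          finally show ?thesis .
        qed
        thus ?thesis by simp
      qed
      finally show ?thesis .
    qed
    have "r j + (column j R \<bullet> column j G) / r j \<le> norm (column j (R + G))"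
      using col_lb[OF cne, of "column j G"] nR cadd by simp
    moreover have "(column j R \<bullet> column j G) / r j = (\<Sum>k\<in>UNIV. D $ k $ j * cc k j) - (\<Sum>i\<in>UNIV. T $ i $ j * w i j)"
    proof -
      have "(\<Sum>k\<in>UNIV. D $ k $ j * (\<Sum>i\<in>I. xs $ i $ j * X $ i $ k)) / r j = (\<Sum>k\<in>UNIV. D $ k $ j * cc k j)"
        unfolding sum_divide_distrib by (rule sum.cong) (simp_all add: cc_def)
      moreover have "(\<Sum>i\<in>UNIV. T $ i $ j * R $ i $ j) / r j = (\<Sum>i\<in>UNIV. T $ i $ j * w i j)"
        unfolding sum_divide_distrib by (rule sum.cong) (simp_all add: w_def)
      ultimately show ?thesis unfolding inn by (simp add: diff_divide_distrib)
    qed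
    ultimately show ?thesis by simp
  qed
  have cc_b: "\<bar>cc k j\<bar> \<le> mu1" if "k \<noteq> j" for k j
  proof -
    have "\<bar>\<Sum>i\<in>I. X $ i $ k * ep $ i $ j\<bar> \<le> cross_sup I X ep j"
      unfolding cross_sup_def by (rule Max_ge) (use that in auto)
    moreover have "(\<Sum>i\<in>I. X $ i $ k * ep $ i $ j) = a j * (\<Sum>i\<in>I. xs $ i $ j * X $ i $ k)"
      by (simp add: ep_eq sum_distrib_left mult.commute mult.left_commute)
    ultimately have "\<bar>a j\<bar> * \<bar>\<Sum>i\<in>I. xs $ i $ j * X $ i $ k\<bar> \<le> cross_sup I X ep j"
      by (simp add: abs_mult)
    hence h: "\<bar>a j\<bar> * \<bar>\<Sum>i\<in>I. xs $ i $ j * X $ i $ k\<bar> / (\<bar>a j\<bar> * r j) \<le> cross_sup I X ep j / (\<bar>a j\<bar> * r j)"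
      by (rule divide_right_mono) (use r_pos[of j] in simp)
    have "\<bar>cc k j\<bar> = \<bar>a j\<bar> * \<bar>\<Sum>i\<in>I. xs $ i $ j * X $ i $ k\<bar> / (\<bar>a j\<bar> * r j)"
      using a_nz[of j] r_pos[of j] by (simp add: cc_def abs_divide)
    also have "\<dots> \<le> cross_sup I X ep j / col_norm_on I ep j" using h col_ep[of j] by simp
    also have "\<dots> \<le> mu1" unfolding mu1_def by (rule Max_range_ge)
    finally show ?thesis .
  qed
  have w_b: "norm (\<chi> j. w i j) \<le> mu2" if "i \<in> I" for i
  proof -
    have "(w i j)\<^sup>2 = (ep $ i $ j)\<^sup>2 / (col_norm_on I ep j)\<^sup>2" for j
      using that a_nz[of j] r_pos[of j] col_ep[of j]
      by (simp add: w_def Rij ep_eq power_divide power_mult_distrib)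
    hence "norm (\<chi> j. w i j) = sqrt (\<Sum>j\<in>UNIV. (ep $ i $ j)\<^sup>2 / (col_norm_on I ep j)\<^sup>2)"
      by (simp add: norm_vec_sq)
    also have "\<dots> \<le> mu2" unfolding mu2_def by (rule Max_range_ge)
    finally show ?thesis .
  qed
  have w0: "(\<chi> j. w i j) = 0" if "i \<notin> I" for i
    using that by (simp add: w_def Rij vec_eq_iff)
  have mu2_nn: "mu2 \<ge> 0"
    using Max_range_ge[of "\<lambda>i. sqrt (\<Sum>j\<in>UNIV. (ep $ i $ j)\<^sup>2 / (col_norm_on I ep j)\<^sup>2)"]
    unfolding mu2_def by (meson order_trans real_sqrt_ge_zero sum_nonneg divide_nonneg_nonneg zero_le_power2)
  have nT21R: "norm_T21 R = (\<Sum>j\<in>UNIV. r j)"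
  proof -
    have "norm (column j R) = r j" for j
    proof -
      have "(\<Sum>i\<in>UNIV. (R $ i $ j)\<^sup>2) = (\<Sum>i\<in>UNIV. if i \<in> I then (xs $ i $ j)\<^sup>2 else 0)"
        by (rule sum.cong) (auto simp: Rij)
      also have "\<dots> = (\<Sum>i\<in>I. (xs $ i $ j)\<^sup>2)" by (simp add: sum.inter_restrict[symmetric])
      finally show ?thesis by (simp add: norm_vec_sq column_def r_def col_norm_on_def)
    qed
    thus ?thesis by (simp add: norm_T21_def)
  qed
  have termD: "D $ k $ j * cc k j \<ge> - (mu1 * \<bar>D $ k $ j\<bar>)" for k j
  proof (cases "k = j")
    case True thus ?thesis using Dd by simp
  next
    case False
    have "\<bar>D $ k $ j * cc k j\<bar> \<le> \<bar>D $ k $ j\<bar> * mu1"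
      unfolding abs_mult by (rule mult_left_mono[OF cc_b[OF False]]) simp
    thus ?thesis by (simp add: abs_le_iff mult.commute)
  qed
  have sD: "(\<Sum>j\<in>UNIV. \<Sum>k\<in>UNIV. D $ k $ j * cc k j) \<ge> - (mu1 * norm11 D)"
  proof -
    have "(\<Sum>j\<in>UNIV. \<Sum>k\<in>UNIV. D $ k $ j * cc k j) \<ge> (\<Sum>j\<in>UNIV. \<Sum>k\<in>UNIV. - (mu1 * \<bar>D $ k $ j\<bar>))"
      by (intro sum_mono termD)
    also have "(\<Sum>j\<in>UNIV. \<Sum>k\<in>UNIV. - (mu1 * \<bar>D $ k $ j\<bar>)) = - (mu1 * norm11 D)"
      unfolding norm11_def sum_negf sum_distrib_left by (subst (2) sum.swap) simp
    finally show ?thesis .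
  qed
  have sT: "(\<Sum>j\<in>UNIV. \<Sum>i\<in>UNIV. T $ i $ j * w i j) \<le> mu2 * norm21_on I T"
  proof -
    have "(\<Sum>j\<in>UNIV. \<Sum>i\<in>UNIV. T $ i $ j * w i j) = (\<Sum>i\<in>UNIV. T $ i \<bullet> (\<chi> j. w i j))"
      by (subst sum.swap) (simp add: inner_vec_def)
    also have "\<dots> \<le> (\<Sum>i\<in>UNIV. if i \<in> I then norm (T $ i) * mu2 else 0)"
    proof (rule sum_mono)
      fix i :: 'n
      show "T $ i \<bullet> (\<chi> j. w i j) \<le> (if i \<in> I then norm (T $ i) * mu2 else 0)"
      proof (cases "i \<in> I")
        case True
        have "T $ i \<bullet> (\<chi> j. w i j) \<le> norm (T $ i) * norm (\<chi> j. w i j)" by (rule norm_cauchy_schwarz)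
        also have "\<dots> \<le> norm (T $ i) * mu2" by (rule mult_left_mono[OF w_b[OF True]]) simp
        finally show ?thesis using True by simp
      next
        case False thus ?thesis using w0[OF False] by simp
      qed
    qed
    also have "\<dots> = mu2 * norm21_on I T"
      by (simp add: sum.inter_restrict[symmetric] norm21_on_def sum_distrib_left mult.commute)
    finally show ?thesis .
  qed
  have L1: "norm_T21 (R + G) \<ge> norm_T21 R - mu1 * norm11 D - mu2 * norm21_on I T"
  proof -
    have "(\<Sum>j\<in>UNIV. r j + (\<Sum>k\<in>UNIV. D $ k $ j * cc k j) - (\<Sum>i\<in>UNIV. T $ i $ j * w i j))
        \<le> (\<Sum>j\<in>UNIV. norm (column j (R + G)))"
      by (intro sum_mono colj)
    also have "(\<Sum>j\<in>UNIV. r j + (\<Sum>k\<in>UNIV. D $ k $ j * cc k j) - (\<Sum>i\<in>UNIV. T $ i $ j * w i j))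
      = (\<Sum>j\<in>UNIV. r j) + (\<Sum>j\<in>UNIV. \<Sum>k\<in>UNIV. D $ k $ j * cc k j) - (\<Sum>j\<in>UNIV. \<Sum>i\<in>UNIV. T $ i $ j * w i j)"
      by (simp only: sum.distrib sum_subtractf)
    ultimately show ?thesis using sD sT nT21R unfolding norm_T21_def[of "R + G"] by linarith
  qed
  have P1: "norm21_on UNIV Thh \<ge> norm21_on UNIV Tb + norm21_on I T - norm21_on Ob T"
  proof -
    have "norm (Tb $ i) + (if i \<in> I then norm (T $ i) else - norm (T $ i)) \<le> norm (Thh $ i)" for i
    proof -
      have "Thh $ i = Tb $ i + T $ i" by (simp add: T_def)
      thus ?thesis using Tb_I[of i] norm_triangle_ineq[of "Tb $ i + T $ i" "- T $ i"] by auto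
    qed
    hence "(\<Sum>i\<in>UNIV. norm (Tb $ i) + (if i \<in> I then norm (T $ i) else - norm (T $ i))) \<le> norm21_on UNIV Thh"
      unfolding norm21_on_def by (rule sum_mono)
    moreover have "(\<Sum>i\<in>UNIV. (if i \<in> I then norm (T $ i) else - norm (T $ i))) = norm21_on I T - norm21_on Ob T"
    proof -
      have "- I = Ob" using partition by blast
      thus ?thesis unfolding norm21_on_def by (simp add: sum.If_cases sum_negf)
    qed
    ultimately show ?thesis unfolding norm21_on_def[of UNIV Tb] by (simp add: sum.distrib)
  qed
  have P2: "norm11 Bh \<ge> norm11 Bs + norm11 (restrJc J D) - norm11 (restrJ J D)"
  proof -
    have e: "\<bar>Bs $ i $ j\<bar> + \<bar>restrJc J D $ i $ j\<bar> - \<bar>restrJ J D $ i $ j\<bar> \<le> \<bar>Bh $ i $ j\<bar>" for i j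
    proof -
      have "Bh $ i $ j = Bs $ i $ j + D $ i $ j" by (simp add: D_def)
      thus ?thesis using Bs_J[of i j] by (cases "i \<in> J j") (auto simp: restrJ_def restrJc_def)
    qed
    have "(\<Sum>i\<in>UNIV. \<Sum>j\<in>UNIV. \<bar>Bs $ i $ j\<bar> + \<bar>restrJc J D $ i $ j\<bar> - \<bar>restrJ J D $ i $ j\<bar>) \<le> norm11 Bh"
      unfolding norm11_def by (intro sum_mono e)
    thus ?thesis unfolding norm11_def by (simp only: sum.distrib sum_subtractf)
  qed
  have P3: "norm11 D = norm11 (restrJ J D) + norm11 (restrJc J D)"
  proof -
    have "\<bar>D $ i $ j\<bar> = \<bar>restrJ J D $ i $ j\<bar> + \<bar>restrJc J D $ i $ j\<bar>" for i j
      by (auto simp: restrJ_def restrJc_def)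
    thus ?thesis unfolding norm11_def by (simp only: sum.distrib)
  qed
  have n11_nn: "norm11 A \<ge> 0" for A :: "real^'p^'p" unfolding norm11_def by (intro sum_nonneg) auto
  have n21_nn: "norm21_on K A \<ge> 0" for K and A :: "real^'p^'n" unfolding norm21_on_def by (intro sum_nonneg) auto
  have mu2_pos: "mu2 > 0"
  proof -
    obtain j0 :: 'p where True by blast
    obtain i where i: "i \<in> I" "ep $ i $ j0 \<noteq> 0" using epnz by blast
    have cpos: "col_norm_on I ep j > 0" for j using col_ep[of j] a_nz[of j] r_pos[of j] by simp
    have "(ep $ i $ j0)\<^sup>2 / (col_norm_on I ep j0)\<^sup>2 \<le> (\<Sum>j\<in>UNIV. (ep $ i $ j)\<^sup>2 / (col_norm_on I ep j)\<^sup>2)"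
      by (rule member_le_sum) auto
    moreover have "(ep $ i $ j0)\<^sup>2 / (col_norm_on I ep j0)\<^sup>2 > 0" using i cpos[of j0] by simp
    ultimately have "sqrt (\<Sum>j\<in>UNIV. (ep $ i $ j)\<^sup>2 / (col_norm_on I ep j)\<^sup>2) > 0" by simp
    also have "\<dots> \<le> mu2" unfolding mu2_def by (rule Max_range_ge)
    finally show ?thesis .
  qed
  define A where "A = norm11 (restrJc J D)"
  define Bq where "Bq = norm11 (restrJ J D)"
  define TI where "TI = norm21_on I T"
  define TO where "TO = norm21_on Ob T"
  have key: "lam*gam*(A - Bq) + lam*(TI - TO) \<le> mu1*(A+Bq) + mu2*TI"
  proof -
    have o1: "objF lam gam (Y+E) Bh Thh = norm_T21 (R + G) + lam * (norm21_on UNIV Thh + gam * norm11 Bh)"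
      by (simp add: objF_def decomp)
    have o2: "objF lam gam (Y+E) Bs Tb = norm_T21 R + lam * (norm21_on UNIV Tb + gam * norm11 Bs)"
      using resid by (simp add: objF_def X_def)
    have m1: "lam * norm21_on UNIV Thh \<ge> lam * (norm21_on UNIV Tb + TI - TO)"
      using P1 lam_nn unfolding TI_def TO_def by (intro mult_left_mono) auto
    have m2: "lam * gam * norm11 Bh \<ge> lam * gam * (norm11 Bs + A - Bq)"
      using P2 lam_nn gam_nn unfolding A_def Bq_def by (intro mult_left_mono) auto
    have "norm_T21 R - mu1 * (A + Bq) - mu2 * TI + lam * (norm21_on UNIV Tb + TI - TO) + lam * gam * (norm11 Bs + A - Bq)
        \<le> norm_T21 R + lam * norm21_on UNIV Tb + lam * gam * norm11 Bs"
      using opt o1 o2 L1 m1 m2 P3 unfolding A_def Bq_def TI_def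
      by (simp add: algebra_simps)
    thus ?thesis by (simp add: algebra_simps)
  qed
  have Ann: "A \<ge> 0" "Bq \<ge> 0" "TI \<ge> 0" "TO \<ge> 0" using n11_nn n21_nn by (simp_all add: A_def Bq_def TI_def TO_def)
  have cm: "c - 1 > 0" using c_gt by simp
  have h1: "(c+1)*mu1 \<le> (c-1)*(lam*gam)"
  proof -
    have "(c+1)/(c-1)*mu1 \<le> lam*gam" using lam_gam unfolding mu1_def X_def ep_def .
    hence "(c-1)*((c+1)/(c-1)*mu1) \<le> (c-1)*(lam*gam)" using cm by (intro mult_left_mono) auto
    thus ?thesis using cm by simp
  qed
  have h2: "(c+1)*mu2 \<le> (c-1)*lam"
  proof -
    have "(c+1)/(c-1)*mu2 \<le> lam" using lam_ge unfolding mu2_def ep_def .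
    hence "(c-1)*((c+1)/(c-1)*mu2) \<le> (c-1)*lam" using cm by (intro mult_left_mono) auto
    thus ?thesis using cm by simp
  qed
  have lam_pos: "lam > 0"
  proof -
    have "0 < (c+1)*mu2" using mu2_pos c_gt by simp
    also have "\<dots> \<le> (c-1)*lam" by (rule h2)
    finally show ?thesis using cm by (simp add: zero_less_mult_iff)
  qed
  have q1: "(c+1)*mu1*(A+Bq) \<le> (c-1)*(lam*gam)*(A+Bq)" using h1 Ann by (intro mult_right_mono) auto
  have q2: "(c+1)*mu2*TI \<le> (c-1)*lam*TI" using h2 Ann by (intro mult_right_mono) auto
  have q3: "(c+1)*(lam*gam*(A - Bq) + lam*(TI - TO)) \<le> (c+1)*(mu1*(A+Bq) + mu2*TI)"
    using key c_gt by (intro mult_left_mono) auto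
  have q4: "(c-1)*lam*TO \<ge> 0" using cm lam_pos Ann by simp
  have fin0: "lam*(gam*A + TI) \<le> lam*(c*(gam*Bq + TO))"
    using q1 q2 q3 q4 by (simp add: algebra_simps)
  have fin: "gam*A + TI \<le> c*(gam*Bq + TO)" using fin0 lam_pos by simp
  have dB: "DeltaB (stack (Bh - Bstar Sigma) (Thh - (Thetastar Sigma E + rows_restrict Ob (xi Sigma E (Y + E))))) = D"
    by (simp add: DeltaB_def stack_def D_def Bs_def vec_eq_iff)
  have dT: "DeltaTheta (stack (Bh - Bstar Sigma) (Thh - (Thetastar Sigma E + rows_restrict Ob (xi Sigma E (Y + E))))) = T"
    by (simp add: DeltaTheta_def stack_def T_def Tb_def xs_def vec_eq_iff)
  show ?thesis unfolding cone_def using fin dB dT negOb by (simp add: A_def Bq_def TI_def TO_def)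
qed

end
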